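(* Let $\phi=(\phi_i)_{i\ge1}$ be a sequence of real numbers and define $\mathcal{H}_0^{\phi}=1$ and, for $n\ge0$, $\mathcal{H}_{n+1}^{\phi}(x)=2x\mathcal{H}_n^{\phi}(x)-(\mathcal{H}_n^{\phi})'(x)+\phi_{n+1}\mathcal{H}_n^{\phi}(x)$. For $n\ge0$ let $\Phi_0^n=1$ and $\Phi_i^n=\sum_{1\le j_1<\dots<j_i\le n}\phi_{j_1}\cdots\phi_{j_i}$ for $1\le i\le n$ (so that $\prod_{i=1}^n(x+\phi_i)=\sum_{j=0}^n\Phi^n_{n-j}x^j$). Then for every $n\ge0$, $$\mathcal{H}_n^{\phi}(x)=\sum_{j=0}^n\Phi_{n-j}^nH_j(x).$$ Moreover, for every $l\ge1$ and every $n\ge l-1$, $$\mathcal{H}_{n+1}^{\phi}(x)=2x\mathcal{H}_n^{\phi^{\{l\}}}(x)-(\mathcal{H}_n^{\phi^{\{l\}}})'(x)+\phi_l\,\mathcal{H}_n^{\phi^{\{l\}}}(x),$$ where $\phi^{\{l\}}$ is the sequence obtained from $\phi$ by removing the term $\phi_l$, i.e. $\phi^{\{l\}}_i=\phi_i$ for $1\le i\le l-1$ and $\phi^{\{l\}}_i=\phi_{i+1}$ for $i\ge l$.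
   Context: $H_j$ denotes the standard (physicists') Hermite polynomial of degree $j$ (orthogonal with respect to $e^{-x^2}$, leading coefficient $2^j$). *)

theory Defs
  imports "HOL-Computational_Algebra.Polynomial"
begin

fun hermite :: "nat \<Rightarrow> real poly" where
  "hermite 0 = 1"
| "hermite (Suc 0) = [:0, 2:]"
| "hermite (Suc (Suc n)) = [:0, 2:] * hermite (Suc n) - smult (2 * real (Suc n)) (hermite n)"

text \<open>The generalized Hermite polynomials; phi is indexed from 1 (phi 0 is unused).\<close>
primrec gen_hermite :: "(nat \<Rightarrow> real) \<Rightarrow> nat \<Rightarrow> real poly" where
  "gen_hermite phi 0 = 1"
| "gen_hermite phi (Suc n) =
     [:0, 2:] * gen_hermite phi n - pderiv (gen_hermite phi n) + smult (phi (Suc n)) (gen_hermite phi n)"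

definition elem_sym :: "(nat \<Rightarrow> real) \<Rightarrow> nat \<Rightarrow> nat \<Rightarrow> real" where
  "elem_sym phi n i = (\<Sum>S\<in>{S. S \<subseteq> {1..n} \<and> card S = i}. \<Prod>j\<in>S. phi j)"

definition remove_term :: "(nat \<Rightarrow> real) \<Rightarrow> nat \<Rightarrow> nat \<Rightarrow> real" where
  "remove_term phi l = (\<lambda>i. if i < l then phi i else phi (Suc i))"

end

theory Submission imports Defs begin

lemma hermite_deriv_aux:
  fixes A B C :: "real poly" and k :: real
  assumes "A = [:0, 2:] * B - smult (2 * (k+1)) C"
    and "pderiv A = smult (2 * (k+2)) B" and "pderiv B = smult (2 * (k+1)) C"
  shows "pderiv ([:0, 2:] * A - smult (2 * (k+2)) B) = smult (2 * (k+3)) A"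
proof -
  have d2: "pderiv [:0, 2::real:] = [:2:]" by (simp add: pderiv_pCons)
  have "pderiv ([:0, 2:] * A - smult (2 * (k+2)) B) = [:2:] * A + [:0,2:] * pderiv A - smult (2 * (k+2)) (pderiv B)"
    by (simp only: pderiv_diff pderiv_mult pderiv_smult d2) (simp add: algebra_simps)
  also have "\<dots> = [:2:] * A + [:2*(k+2):] * ([:0,2:] * B - smult (2 * (k+1)) C)"
    using assms(2,3) by (simp add: algebra_simps)
  also have "\<dots> = [:2:] * A + [:2*(k+2):] * A" using assms(1) by simp
  also have "\<dots> = [:2*(k+3):] * A" by (simp flip: smult_add_left add: add.commute)
  finally show ?thesis by simp
qed

lemma hermite_deriv: "pderiv (hermite (Suc n)) = smult (2 * real (Suc n)) (hermite n)"
proof (induction n rule: hermite.induct)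
  case 1
  then show ?case by (simp add: pderiv_pCons)
next
  case 2
  then show ?case by (simp add: pderiv_pCons pderiv_mult pderiv_smult numeral_2_eq_2)
next
  case (3 n)
  have e: "hermite (Suc (Suc (Suc n))) = [:0, 2:] * hermite (Suc (Suc n)) - smult (2 * (real n+2)) (hermite (Suc n))"
    by (simp add: algebra_simps)
  have "pderiv (hermite (Suc (Suc (Suc n)))) = smult (2 * (real n+3)) (hermite (Suc (Suc n)))"
    unfolding e
    by (rule hermite_deriv_aux[where C = "hermite n"]) (use 3 in \<open>simp_all add: algebra_simps\<close>)
  then show ?case by (simp add: algebra_simps)
qed

lemma hermite_T: "[:0, 2:] * hermite j - pderiv (hermite j) = hermite (Suc j)"
proof (cases j)
  case 0 then show ?thesis by simp
next
  case (Suc m) then show ?thesis by (simp add: hermite_deriv)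
qed

definition S :: "nat \<Rightarrow> real poly \<Rightarrow> real poly" where
  "S n q = (\<Sum>j\<le>n. smult (coeff q j) (hermite j))"

lemma pderiv_sum': "pderiv (sum f A) = (\<Sum>x\<in>A. pderiv (f x))"
  by (induction A rule: infinite_finite_induct) (simp_all add: pderiv_add)

lemma smult_sum_right: "smult c (sum f A) = (\<Sum>x\<in>A. smult c (f x))"
  by (induction A rule: infinite_finite_induct) (simp_all add: smult_add_right)

lemma S_add: "S n (p + q) = S n p + S n q"
  by (simp add: S_def smult_add_left sum.distrib)

lemma S_smult: "S n (smult c q) = smult c (S n q)"
  by (simp add: S_def smult_sum_right)

lemma S_T: "[:0,2:] * S n q - pderiv (S n q) = (\<Sum>j\<le>n. smult (coeff q j) (hermite (Suc j)))"
proof -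
  have "[:0,2:] * S n q - pderiv (S n q) = (\<Sum>j\<le>n. smult (coeff q j) ([:0,2:] * hermite j - pderiv (hermite j)))"
    by (simp add: S_def pderiv_sum' pderiv_smult smult_sum_right sum_distrib_left sum_subtractf smult_diff_right)
  then show ?thesis by (simp only: hermite_T)
qed

lemma S_pCons: "S (Suc n) (pCons 0 q) = (\<Sum>j\<le>n. smult (coeff q j) (hermite (Suc j)))"
  unfolding S_def by (subst sum.atMost_Suc_shift) simp

lemma S_Suc: "degree q \<le> n \<Longrightarrow> S (Suc n) q = S n q"
  by (simp add: S_def coeff_eq_0)

lemma S_step:
  assumes "degree q \<le> n"
  shows "[:0,2:] * S n q - pderiv (S n q) + smult c (S n q) = S (Suc n) (q * [:c,1:])"
proof -
  have "q * [:c,1:] = smult c q + pCons 0 q" by (simp add: algebra_simps)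
  then show ?thesis using assms by (simp only: S_add S_smult S_pCons S_T S_Suc)
qed

definition Q :: "(nat \<Rightarrow> real) \<Rightarrow> nat \<Rightarrow> real poly" where
  "Q phi n = (\<Prod>i=1..n. [:phi i, 1:])"

lemma Q_Suc: "Q phi (Suc n) = Q phi n * [:phi (Suc n), 1:]"
  by (simp add: Q_def prod.nat_ivl_Suc' mult.commute)

lemma degree_Q: "degree (Q phi n) \<le> n"
proof (induction n)
  case 0 then show ?case by (simp add: Q_def)
next
  case (Suc n)
  have "degree (Q phi (Suc n)) \<le> degree (Q phi n) + degree [:phi (Suc n), 1:]"
    unfolding Q_Suc by (rule degree_mult_le)
  with Suc show ?case by simp
qed

lemma gen_Q: "gen_hermite phi n = S n (Q phi n)"
proof (induction n)
  case 0 then show ?case by (simp add: Q_def S_def)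
next
  case (Suc n)
  then show ?case by (simp only: gen_hermite.simps S_step degree_Q Q_Suc)
qed

lemma prod_const_poly: "(\<Prod>i\<in>X. [:f i:]) = [:prod f X:]"
  by (induction X rule: infinite_finite_induct) (simp_all add: mult.commute)

lemma coeff_Q:
  assumes "j \<le> n"
  shows "coeff (Q phi n) j = elem_sym phi n (n - j)"
proof -
  have "Q phi n = (\<Prod>i\<in>{1..n}. [:phi i:] + [:0,1:])" by (simp add: Q_def)
  also have "\<dots> = (\<Sum>X\<in>Pow {1..n}. (\<Prod>i\<in>X. [:phi i:]) * (\<Prod>i\<in>{1..n}-X. [:0,1:]))"
    by (rule prod_add) simp
  also have "\<dots> = (\<Sum>X\<in>Pow {1..n}. smult (prod phi X) (monom 1 (n - card X)))"
  proof (rule sum.cong)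
    fix X assume X: "X \<in> Pow {1..n}"
    then have "finite X" by (auto intro: finite_subset)
    with X have "card ({1..n}-X) = n - card X" by (simp add: card_Diff_subset)
    then show "(\<Prod>i\<in>X. [:phi i:]) * (\<Prod>i\<in>{1..n}-X. [:0,1:]) = smult (prod phi X) (monom 1 (n - card X))"
      by (simp add: prod_const_poly monom_altdef)
  qed simp
  finally have "coeff (Q phi n) j = (\<Sum>X\<in>Pow {1..n}. if n - card X = j then prod phi X else 0)"
    by (simp add: coeff_sum coeff_monom if_distrib cong: if_cong)
  also have "\<dots> = (\<Sum>X\<in>{X\<in>Pow {1..n}. n - card X = j}. prod phi X)"
    by (rule sum.inter_filter[symmetric]) simp
  also have "{X\<in>Pow {1..n}. n - card X = j} = {S. S \<subseteq> {1..n} \<and> card S = n - j}"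
  proof -
    have "X \<subseteq> {1..n} \<Longrightarrow> card X \<le> n" for X
      using card_mono[of "{1..n}" X] by simp
    then show ?thesis using assms by auto
  qed
  finally show ?thesis by (simp add: elem_sym_def)
qed

lemma part1: "gen_hermite phi n = (\<Sum>j\<le>n. smult (elem_sym phi n (n - j)) (hermite j))"
  unfolding gen_Q S_def by (rule sum.cong) (simp_all add: coeff_Q)

lemma Q_remove:
  assumes "1 \<le> l"
  shows "Q phi (Suc (l - 1 + k)) = Q (remove_term phi l) (l - 1 + k) * [:phi l, 1:]"
proof (induction k)
  case 0
  have "Q (remove_term phi l) (l - 1) = Q phi (l - 1)"
    unfolding Q_def by (rule prod.cong) (auto simp: remove_term_def)
  moreover have "Q phi (Suc (l - 1)) = Q phi (l - 1) * [:phi l, 1:]"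
    using Q_Suc[of phi "l - 1"] assms by simp
  ultimately show ?case by simp
next
  case (Suc k)
  have r: "remove_term phi l (Suc (l - 1 + k)) = phi (Suc (Suc (l - 1 + k)))"
    using assms by (simp add: remove_term_def)
  have "Q phi (Suc (l - 1 + Suc k)) = Q phi (Suc (l - 1 + k)) * [:phi (Suc (Suc (l - 1 + k))), 1:]"
    by (simp add: Q_Suc)
  also have "\<dots> = Q (remove_term phi l) (Suc (l - 1 + k)) * [:phi l, 1:]"
  proof -
    have "Q (remove_term phi l) (Suc (l - 1 + k)) = Q (remove_term phi l) (l - 1 + k) * [:phi (Suc (Suc (l - 1 + k))), 1:]"
      using Q_Suc[of "remove_term phi l" "l - 1 + k"] r by simp
    then show ?thesis unfolding Suc by (simp only: mult_ac)
  qed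
  finally show ?case by simp
qed

lemma part2:
  assumes "1 \<le> l" "l - 1 \<le> n"
  shows "gen_hermite phi (Suc n) =
              [:0, 2:] * gen_hermite (remove_term phi l) n
              - pderiv (gen_hermite (remove_term phi l) n)
              + smult (phi l) (gen_hermite (remove_term phi l) n)"
proof -
  obtain k where k: "n = l - 1 + k" using assms(2) le_Suc_ex by blast
  show ?thesis
    unfolding gen_Q S_step[OF degree_Q] k Q_remove[OF assms(1)] ..
qed

theorem lemma3p5:
  fixes phi :: "nat \<Rightarrow> real"
  shows "(\<forall>n. gen_hermite phi n = (\<Sum>j\<le>n. smult (elem_sym phi n (n - j)) (hermite j)))
       \<and> (\<forall>l n. 1 \<le> l \<longrightarrow> l - 1 \<le> n \<longrightarrow>
            gen_hermite phi (Suc n) =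
              [:0, 2:] * gen_hermite (remove_term phi l) n
              - pderiv (gen_hermite (remove_term phi l) n)
              + smult (phi l) (gen_hermite (remove_term phi l) n))"
  using part1 part2 by blast

end
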